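(* Let $\lambda_1>\lambda_0>0$ and $a,b>0$ with $\lambda_1-\lambda_0>\frac1a+\frac1b$, and let $0<\alpha^*<b/a<\beta^*$ be the optimal stopping boundaries described in the context. Let $X$ be a Poisson process with $X_0=0$ which under the probability measure $\mathsf P_0$ has intensity $\lambda_0$, and set $L_t=\exp\{X_t\log(\lambda_1/\lambda_0)-(\lambda_1-\lambda_0)t\}$. For $\varphi>0$ define $\tau^*(\varphi)=\inf\{t\ge 0:\varphi L_t\notin(\alpha^*,\beta^* )\}$. Then: (1) for any $\varphi_0\in(\alpha^*,\beta^* )$, $\tau^*(\varphi)\to\tau^*(\varphi_0)$ $\mathsf P_0$-a.s. as $\varphi\to\varphi_0$; (2) $\tau^*(\varphi)\to 0$ $\mathsf P_0$-a.s. as $\varphi\downarrow\alpha^*$; (3) $\lim_{\varphi\uparrow\beta^*}\tau^*(\varphi)=\theta(\beta^* )$ $\mathsf P_0$-a.s., where $\theta(\beta^* ):=\inf\{t\ge0: L_t\notin(\alpha^*/\beta^*,1]\}$.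
   Context: Setting: one observes a Poisson process $X$ whose intensity is $\lambda_0$ or $\lambda_1$ ($\lambda_1>\lambda_0>0$). $\mathsf P_0$ ($\mathsf E_0$) denotes the law (expectation) under which $X$ is Poisson with intensity $\lambda_0$, $X_0=0$; $\mathbb S$ is the set of stopping times of the natural filtration of $X$. For a prior parameter $\psi>0$ (prior probability $\psi/(1+\psi)$ of intensity $\lambda_1$) and $\tau\in\mathbb S$, the Bayes cost is $\bar J(\psi;\tau)=\frac{1}{1+\psi}\mathsf E_0\big[\int_0^\tau(1+\psi L_t)\,dt+(a\psi L_\tau)\wedge b\big]$. When $\lambda_1-\lambda_0>1/a+1/b$ there exist unique constants $0<\alpha^*<b/a<\beta^*$ (independent of $\psi$) such that for every $\psi>0$ the stopping time $\inf\{t\ge0:\psi L_t\notin(\alpha^*,\beta^* )\}$ minimizes $\bar J(\psi;\cdot)$ over $\mathbb S$; these are the $\alpha^*,\beta^*$ in the statement. *)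

theory Defs
  imports "HOL-Probability.Probability"
begin

definition poisson_process :: "'a measure \<Rightarrow> real \<Rightarrow> (real \<Rightarrow> 'a \<Rightarrow> nat) \<Rightarrow> bool" where
  "poisson_process M lam X \<longleftrightarrow>
     prob_space M \<and>
     (\<forall>t. X t \<in> measurable M (count_space UNIV)) \<and>
     (\<forall>\<omega>\<in>space M. X 0 \<omega> = 0 \<and> mono_on {0..} (\<lambda>t. X t \<omega>) \<and>
        (\<forall>t\<ge>0. continuous (at_right t) (\<lambda>s. real (X s \<omega>)))) \<and>
     (\<forall>s t. 0 \<le> s \<and> s < t \<longrightarrow>
        distr M (count_space UNIV) (\<lambda>\<omega>. X t \<omega> - X s \<omega>) = measure_pmf (poisson_pmf (lam * (t - s)))) \<and>
     (\<forall>(ts :: nat \<Rightarrow> real) n. 0 \<le> ts 0 \<and> (\<forall>i. ts i < ts (Suc i)) \<longrightarrow>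
        prob_space.indep_vars M (\<lambda>_. count_space UNIV)
          (\<lambda>i \<omega>. X (ts (Suc i)) \<omega> - X (ts i) \<omega>) {..<n})"

definition lik :: "real \<Rightarrow> real \<Rightarrow> (real \<Rightarrow> 'a \<Rightarrow> nat) \<Rightarrow> real \<Rightarrow> 'a \<Rightarrow> real" where
  "lik lam0 lam1 X t \<omega> = exp (real (X t \<omega>) * ln (lam1 / lam0) - (lam1 - lam0) * t)"

definition nat_filtration :: "'a measure \<Rightarrow> (real \<Rightarrow> 'a \<Rightarrow> nat) \<Rightarrow> real \<Rightarrow> 'a set set" where
  "nat_filtration M X t = sigma_sets (space M) (\<Union>s\<in>{0..t}. {X s -` A \<inter> space M | A. True})"

definition is_stopping_time :: "'a measure \<Rightarrow> (real \<Rightarrow> 'a \<Rightarrow> nat) \<Rightarrow> ('a \<Rightarrow> ereal) \<Rightarrow> bool" where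
  "is_stopping_time M X \<tau> \<longleftrightarrow> (\<forall>\<omega>\<in>space M. 0 \<le> \<tau> \<omega>) \<and>
     (\<forall>t\<ge>0. {\<omega>\<in>space M. \<tau> \<omega> \<le> ereal t} \<in> nat_filtration M X t)"

text \<open>Bayes cost
  Jbar(psi; tau) = 1/(1+psi) E_0[ int_0^tau (1 + psi L_t) dt + (a psi L_tau) min b ].
  On {tau = \<infinity>} the integral term is already infinite; the terminal term is set to 0 there.\<close>
definition bayes_cost :: "'a measure \<Rightarrow> (real \<Rightarrow> 'a \<Rightarrow> real) \<Rightarrow> real \<Rightarrow> real \<Rightarrow> real \<Rightarrow> ('a \<Rightarrow> ereal) \<Rightarrow> ennreal" where
  "bayes_cost M L a b \<psi> \<tau> = ennreal (1 / (1 + \<psi>)) *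
     (\<integral>\<^sup>+\<omega>. ((\<integral>\<^sup>+t\<in>{t. 0 \<le> t \<and> ereal t < \<tau> \<omega>}. ennreal (1 + \<psi> * L t \<omega>) \<partial>lborel)
           + (if \<tau> \<omega> = \<infinity> then 0 else ennreal (min (a * \<psi> * L (real_of_ereal (\<tau> \<omega>)) \<omega>) b))) \<partial>M)"

definition exit_time :: "(real \<Rightarrow> 'a \<Rightarrow> real) \<Rightarrow> real \<Rightarrow> real \<Rightarrow> real \<Rightarrow> 'a \<Rightarrow> ereal" where
  "exit_time L \<alpha> \<beta> \<phi> \<omega> = Inf {ereal t | t. 0 \<le> t \<and> \<phi> * L t \<omega> \<notin> {\<alpha><..<\<beta>}}"

definition theta_time :: "(real \<Rightarrow> 'a \<Rightarrow> real) \<Rightarrow> real \<Rightarrow> real \<Rightarrow> 'a \<Rightarrow> ereal" where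
  "theta_time L \<alpha> \<beta> \<omega> = Inf {ereal t | t. 0 \<le> t \<and> L t \<omega> \<notin> {\<alpha> / \<beta><..1}}"

end

theory Submission
  imports Defs
begin


lemma no_jump:
  assumes PP: "poisson_process M lam X" and lam: "0 < lam" and s: "0 < s"
  shows "AE \<omega> in M. \<not> (\<forall>\<epsilon>. 0 < \<epsilon> \<and> \<epsilon> \<le> s \<longrightarrow> X (s - \<epsilon>) \<omega> < X s \<omega>)"
proof -
  interpret prob_space M using PP unfolding poisson_process_def by blast
  have Xm: "\<And>t. X t \<in> M \<rightarrow>\<^sub>M count_space UNIV" using PP unfolding poisson_process_def by blast
  have distr: "\<And>u t. 0 \<le> u \<Longrightarrow> u < t \<Longrightarrow> distr M (count_space UNIV) (\<lambda>\<omega>. X t \<omega> - X u \<omega>)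
      = measure_pmf (poisson_pmf (lam * (t - u)))" using PP unfolding poisson_process_def by blast
  define e where "e n = s / real (Suc n)" for n
  have e: "0 < e n" "e n \<le> s" for n using s by (auto simp: e_def field_simps)
  define f where "f n = (\<lambda>\<omega>. X s \<omega> - X (s - e n) \<omega>)" for n
  have fm: "f n \<in> M \<rightarrow>\<^sub>M count_space UNIV" for n
    unfolding f_def
    by (rule measurable_compose_countable'[where g="X s" and I=UNIV, OF _ Xm]) 
       (auto intro: measurable_compose[OF Xm])
  define E where "E n = f n -` {1..} \<inter> space M" for n
  have Em: "E n \<in> sets M" for n unfolding E_def by (rule measurable_sets[OF fm]) auto
  have mE: "measure M (E n) = 1 - exp (- (lam * e n))" for n
  proof -
    have "measure M (E n) = measure (distr M (count_space UNIV) (f n)) {1..}"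
      unfolding E_def by (subst measure_distr[OF fm]) auto
    also have "\<dots> = measure_pmf.prob (poisson_pmf (lam * e n)) {1..}"
      unfolding f_def using distr[of "s - e n" s] e[of n] by simp
    also have "\<dots> = measure_pmf.prob (poisson_pmf (lam * e n)) (UNIV - {0})"
      by (rule arg_cong[where f="measure_pmf.prob _"]) auto
    also have "\<dots> = 1 - measure_pmf.prob (poisson_pmf (lam * e n)) {0}"
      by (subst measure_pmf.prob_compl[symmetric]) auto
    also have "\<dots> = 1 - exp (- (lam * e n))"
      using lam e[of n] by (simp add: measure_pmf_single)
    finally show ?thesis .
  qed
  define N where "N = (\<Inter>n. E n)"
  have Nm: "N \<in> sets M" unfolding N_def using Em by auto
  have "measure M N \<le> 1 - exp (- (lam * e n))" for n
    using finite_measure_mono[of N "E n"] Em mE unfolding N_def by auto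
  moreover have "(\<lambda>n. 1 - exp (- (lam * e n))) \<longlonglongrightarrow> 1 - exp (- (lam * 0))"
  proof -
    have "(\<lambda>n. s * inverse (real (Suc n))) \<longlonglongrightarrow> s * 0"
      by (intro tendsto_intros LIMSEQ_inverse_real_of_nat)
    then have "e \<longlonglongrightarrow> 0" unfolding e_def by (simp add: divide_inverse)
    then show ?thesis by (intro tendsto_intros)
  qed
  ultimately have "measure M N \<le> 0"
    by (intro LIMSEQ_le_const[of "(\<lambda>n. 1 - exp (- (lam * e n)))"]) auto
  then have "N \<in> null_sets M" using Nm
  proof -
    have "measure M N = 0" using \<open>measure M N \<le> 0\<close> measure_nonneg[of M N] by linarith
    then show ?thesis using Nm by (auto simp: emeasure_eq_measure)
  qed
  moreover have "{\<omega>\<in>space M. \<not> \<not> (\<forall>\<epsilon>. 0 < \<epsilon> \<and> \<epsilon> \<le> s \<longrightarrow> X (s - \<epsilon>) \<omega> < X s \<omega>)} \<subseteq> N"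
  proof
    fix \<omega> assume "\<omega> \<in> {\<omega>\<in>space M. \<not> \<not> (\<forall>\<epsilon>. 0 < \<epsilon> \<and> \<epsilon> \<le> s \<longrightarrow> X (s - \<epsilon>) \<omega> < X s \<omega>)}"
    then have om: "\<omega> \<in> space M" and j: "\<And>n. X (s - e n) \<omega> < X s \<omega>" using e by auto
    show "\<omega> \<in> N" unfolding N_def E_def f_def using om j by (auto simp: Suc_le_eq)
  qed
  ultimately show ?thesis by (rule AE_I')
qed



definition Lp :: "(real \<Rightarrow> nat) \<Rightarrow> real \<Rightarrow> real \<Rightarrow> real \<Rightarrow> real" where
  "Lp x c d t = exp (real (x t) * c - d * t)"

definition ift :: "(real \<Rightarrow> bool) \<Rightarrow> ereal" where
  "ift P = Inf {ereal t | t. 0 \<le> t \<and> P t}"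

lemma ift_ge: "(\<And>t. 0 \<le> t \<Longrightarrow> t \<le> T \<Longrightarrow> \<not> P t) \<Longrightarrow> ereal T \<le> ift P"
  unfolding ift_def by (rule Inf_greatest) force

lemma ift_le: "0 \<le> t \<Longrightarrow> P t \<Longrightarrow> ift P \<le> ereal t"
  unfolding ift_def by (rule Inf_lower) blast

lemma ift_nonneg: "0 \<le> ift P"
  unfolding ift_def by (rule Inf_greatest) auto

lemma ift_lt: "0 \<le> t \<Longrightarrow> ereal t < ift P \<Longrightarrow> \<not> P t"
  using ift_le[of t P] by auto

lemma ift_approx:
  assumes "ift P = ereal s" "s < w"
  shows "\<exists>t. 0 \<le> t \<and> P t \<and> s \<le> t \<and> t < w"
proof -
  have "ift P < ereal w" using assms by simp
  then obtain z where z: "z \<in> {ereal t | t. 0 \<le> t \<and> P t}" "z < ereal w"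
    unfolding ift_def Inf_less_iff by blast
  then obtain t where t: "z = ereal t" "0 \<le> t" "P t" by blast
  have "ift P \<le> ereal t" using ift_le t by blast
  then show ?thesis using t z assms by auto
qed

lemma ift_lessD: "ift P < y \<Longrightarrow> \<exists>t. 0 \<le> t \<and> P t \<and> ereal t < y"
  unfolding ift_def Inf_less_iff by blast

locale pth =
  fixes x :: "real \<Rightarrow> nat" and c d :: real
  assumes mono: "mono_on {0..} x"
    and rc: "\<And>t. 0 \<le> t \<Longrightarrow> \<exists>\<delta>>0. \<forall>u. t \<le> u \<and> u < t + \<delta> \<longrightarrow> x u = x t"
    and c: "0 < c" and d: "0 < d"
begin

lemma monoD': "0 \<le> s \<Longrightarrow> s \<le> t \<Longrightarrow> x s \<le> x t"
  using mono by (auto simp: mono_on_def)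

lemma core:
  fixes t :: "nat \<Rightarrow> real"
  assumes t: "\<And>n. t n \<in> {0..T}"
  shows "\<exists>r t' k. strict_mono r \<and> t' \<in> {0..T} \<and> (\<lambda>n. t (r n)) \<longlonglongrightarrow> t' \<and>
     (\<forall>\<^sub>F n in sequentially. x (t (r n)) = k) \<and> k \<le> x t' \<and>
     (k = x t' \<or> (0 < t' \<and> (\<forall>\<epsilon>. 0 < \<epsilon> \<and> \<epsilon> \<le> t' \<longrightarrow> x (t' - \<epsilon>) \<le> k)))"
proof -
  obtain r where r: "strict_mono r" "monoseq (\<lambda>n. t (r n))" using seq_monosub[of t] by blast
  define u where "u n = t (r n)" for n
  have u: "u n \<in> {0..T}" for n using t unfolding u_def by auto
  have "Bseq u" by (rule BseqI'[of _ T]) (use u in auto)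
  with r(2) have "convergent u" unfolding u_def by (intro Bseq_monoseq_convergent) (auto simp: u_def)
  then obtain t' where ut: "u \<longlonglongrightarrow> t'" by (auto simp: convergent_def)
  have t'0: "0 \<le> t'" by (rule LIMSEQ_le_const[OF ut]) (use u in auto)
  have t'T: "t' \<le> T" by (rule LIMSEQ_le_const2[OF ut]) (use u in auto)
  from r(2) have "incseq u \<or> decseq u" unfolding monoseq_iff u_def by simp
  then show ?thesis
  proof
    assume dec: "decseq u"
    have ge: "t' \<le> u n" for n using decseq_ge[OF dec ut] .
    obtain \<delta> where \<delta>: "\<delta> > 0" "\<And>v. t' \<le> v \<and> v < t' + \<delta> \<Longrightarrow> x v = x t'" using rc[OF t'0] by blast
    have "\<forall>\<^sub>F n in sequentially. u n < t' + \<delta>" using ut \<delta>(1) by (intro order_tendstoD(2)) auto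
    then have "\<forall>\<^sub>F n in sequentially. x (u n) = x t'"
    proof eventually_elim
      case (elim n)
      then show ?case using \<delta>(2)[of "u n"] ge[of n] by simp
    qed
    then have ev': "\<forall>\<^sub>F n in sequentially. x (t (r n)) = x t'" unfolding u_def .
    have ut': "(\<lambda>n. t (r n)) \<longlonglongrightarrow> t'" using ut unfolding u_def .
    show ?thesis
      by (rule exI[of _ r], rule exI[of _ t'], rule exI[of _ "x t'"]) (intro conjI r(1) ut' ev' order_refl disjI1 refl, simp add: t'0 t'T)
  next
    assume inc: "incseq u"
    have le: "u n \<le> t'" for n using incseq_le[OF inc ut] .
    show ?thesis
    proof (cases "\<exists>n0. u n0 = t'")
      case True
      then obtain n0 where n0: "u n0 = t'" by blast
      have "\<forall>\<^sub>F n in sequentially. x (u n) = x t'"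
        unfolding eventually_sequentially
      proof (intro exI allI impI)
        fix n assume "n0 \<le> n"
        then have "u n0 \<le> u n" using inc by (auto simp: incseq_def)
        then have "u n = t'" using le[of n] n0 by auto
        then show "x (u n) = x t'" by simp
      qed
      then have ev': "\<forall>\<^sub>F n in sequentially. x (t (r n)) = x t'" unfolding u_def .
      have ut': "(\<lambda>n. t (r n)) \<longlonglongrightarrow> t'" using ut unfolding u_def .
      show ?thesis
        by (rule exI[of _ r], rule exI[of _ t'], rule exI[of _ "x t'"]) (intro conjI r(1) ut' ev' order_refl disjI1 refl, simp add: t'0 t'T)
  next
      case False
      have lt: "u n < t'" for n
      proof -
        have "u n \<noteq> t'" using False by blast
        then show ?thesis using le[of n] by simp
      qed
      have t'pos: "0 < t'" using lt[of 0] u[of 0] by auto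
      define S where "S = range (\<lambda>n. x (u n))"
      have Ssub: "S \<subseteq> {..x t'}"
      proof
        fix z assume "z \<in> S"
        then obtain n where "z = x (u n)" unfolding S_def by blast
        moreover have "x (u n) \<le> x t'" using u[of n] le[of n] by (intro monoD') auto
        ultimately show "z \<in> {..x t'}" by simp
      qed
      then have finS: "finite S" using finite_subset by blast
      define k where "k = Max S"
      have "k \<in> S" unfolding k_def using finS by (intro Max_in) (auto simp: S_def)
      then obtain N where N: "x (u N) = k" unfolding S_def by auto
      have kmax: "x (u n) \<le> k" for n unfolding k_def using finS by (intro Max_ge) (auto simp: S_def)
      have ev: "x (u n) = k" if "N \<le> n" for n
      proof -
        have "u N \<le> u n" using inc that by (auto simp: incseq_def)
        then have "x (u N) \<le> x (u n)" using u[of N] by (intro monoD') auto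
        then show ?thesis using kmax[of n] N by auto
      qed
      have kle: "k \<le> x t'" using Ssub \<open>k \<in> S\<close> by auto
      have jump: "x (t' - \<epsilon>) \<le> k" if "0 < \<epsilon>" "\<epsilon> \<le> t'" for \<epsilon>
      proof -
        have "\<forall>\<^sub>F n in sequentially. t' - \<epsilon> < u n" using ut that by (intro order_tendstoD(1)) auto
        then obtain n1 where n1: "\<And>n. n \<ge> n1 \<Longrightarrow> t' - \<epsilon> < u n" unfolding eventually_sequentially by blast
        define n where "n = max n1 N"
        have "x (t' - \<epsilon>) \<le> x (u n)" using n1[of n] that by (intro monoD') (auto simp: n_def)
        also have "\<dots> = k" using ev[of n] by (auto simp: n_def)
        finally show ?thesis .
      qed
      have "\<forall>\<^sub>F n in sequentially. x (u n) = k" unfolding eventually_sequentially using ev by blast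
      then have ev': "\<forall>\<^sub>F n in sequentially. x (t (r n)) = k" unfolding u_def .
      have ut': "(\<lambda>n. t (r n)) \<longlonglongrightarrow> t'" using ut unfolding u_def .
      have j': "0 < t' \<and> (\<forall>\<epsilon>. 0 < \<epsilon> \<and> \<epsilon> \<le> t' \<longrightarrow> x (t' - \<epsilon>) \<le> k)" using jump t'pos by blast
      show ?thesis
        by (rule exI[of _ r], rule exI[of _ t'], rule exI[of _ k]) (intro conjI r(1) ut' ev' kle disjI2[OF j'], simp add: t'0 t'T)
    qed
  qed
qed

lemma lim_along:
  fixes t :: "nat \<Rightarrow> real"
  assumes "(\<lambda>n. t (r n)) \<longlonglongrightarrow> t'" "\<forall>\<^sub>F n in sequentially. x (t (r n)) = k"
  shows "(\<lambda>n. K * Lp x c d (t (r n))) \<longlonglongrightarrow> K * exp (real k * c - d * t')"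
proof -
  have "(\<lambda>n. K * exp (real k * c - d * t (r n))) \<longlonglongrightarrow> K * exp (real k * c - d * t')"
    by (intro tendsto_intros assms(1))
  moreover have "\<forall>\<^sub>F n in sequentially. K * exp (real k * c - d * t (r n)) = K * Lp x c d (t (r n))"
    using assms(2) by eventually_elim (simp add: Lp_def)
  ultimately show ?thesis by (rule Lim_transform_eventually)
qed

lemma inf_margin:
  assumes K: "0 < K" and pos: "\<forall>t\<in>{0..T}. a < K * Lp x c d t"
    and nb: "\<And>s k. 0 < s \<Longrightarrow> K * exp (real k * c - d * s) = a \<Longrightarrow>
               \<not> (\<forall>\<epsilon>. 0 < \<epsilon> \<and> \<epsilon> \<le> s \<longrightarrow> x (s - \<epsilon>) < x s)"
  shows "\<exists>m>a. \<forall>t\<in>{0..T}. m \<le> K * Lp x c d t"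
proof (rule ccontr)
  assume neg: "\<not> ?thesis"
  have "\<forall>n::nat. \<exists>t\<in>{0..T}. K * Lp x c d t < a + inverse (real (Suc n))"
  proof
    fix n :: nat
    have "a < a + inverse (real (Suc n))" by simp
    then show "\<exists>t\<in>{0..T}. K * Lp x c d t < a + inverse (real (Suc n))"
      using neg by (meson not_le)
  qed
  then have "\<forall>n. \<exists>t. t \<in> {0..T} \<and> K * Lp x c d t < a + inverse (real (Suc n))" by blast
  from choice[OF this] obtain t where "\<forall>n. t n \<in> {0..T} \<and> K * Lp x c d (t n) < a + inverse (real (Suc n))" by blast
  then have t: "\<And>n. t n \<in> {0..T}" "\<And>n. K * Lp x c d (t n) < a + inverse (real (Suc n))" by blast+
  obtain r t' k where ck: "strict_mono r" "t' \<in> {0..T}" "(\<lambda>n. t (r n)) \<longlonglongrightarrow> t'"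
     "\<forall>\<^sub>F n in sequentially. x (t (r n)) = k" "k \<le> x t'"
     "k = x t' \<or> (0 < t' \<and> (\<forall>\<epsilon>. 0 < \<epsilon> \<and> \<epsilon> \<le> t' \<longrightarrow> x (t' - \<epsilon>) \<le> k))"
    using core[of t T, OF t(1)] by blast
  have L1: "(\<lambda>n. K * Lp x c d (t (r n))) \<longlonglongrightarrow> K * exp (real k * c - d * t')"
    by (rule lim_along[of t r, OF ck(3,4)])
  have L2: "(\<lambda>n. K * Lp x c d (t (r n))) \<longlonglongrightarrow> a"
  proof (rule tendsto_sandwich[of "\<lambda>n. a" _ _ "\<lambda>n. a + inverse (real (Suc n))"])
    show "\<forall>\<^sub>F n in sequentially. a \<le> K * Lp x c d (t (r n))"
      using pos t(1) by (intro always_eventually allI less_imp_le) auto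
    have "K * Lp x c d (t (r n)) \<le> a + inverse (real (Suc n))" for n
    proof -
      have "n \<le> r n" using seq_suble[OF ck(1)] .
      then have "inverse (real (Suc (r n))) \<le> inverse (real (Suc n))"
        by (intro le_imp_inverse_le) auto
      then show ?thesis using t(2)[of "r n"] by linarith
    qed
    then show "\<forall>\<^sub>F n in sequentially. K * Lp x c d (t (r n)) \<le> a + inverse (real (Suc n))" by auto
    show "(\<lambda>n. a) \<longlonglongrightarrow> a" by simp
    show "(\<lambda>n. a + inverse (real (Suc n))) \<longlonglongrightarrow> a" by (rule LIMSEQ_inverse_real_of_nat_add)
  qed
  have eq: "K * exp (real k * c - d * t') = a" using LIMSEQ_unique[OF L1 L2] .
  from ck(6) show False
  proof
    assume "k = x t'"
    then have "K * Lp x c d t' = a" using eq by (simp add: Lp_def)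
    moreover have "a < K * Lp x c d t'" using pos ck(2) by blast
    ultimately show False by simp
  next
    assume j: "0 < t' \<and> (\<forall>\<epsilon>. 0 < \<epsilon> \<and> \<epsilon> \<le> t' \<longrightarrow> x (t' - \<epsilon>) \<le> k)"
    have "k \<noteq> x t'"
    proof
      assume "k = x t'"
      then have "K * Lp x c d t' = a" using eq by (simp add: Lp_def)
      moreover have "a < K * Lp x c d t'" using pos ck(2) by blast
      ultimately show False by simp
    qed
    then have kl: "k < x t'" using ck(5) by simp
    have "\<forall>\<epsilon>. 0 < \<epsilon> \<and> \<epsilon> \<le> t' \<longrightarrow> x (t' - \<epsilon>) < x t'"
    proof (intro allI impI)
      fix \<epsilon> assume "0 < \<epsilon> \<and> \<epsilon> \<le> t'"
      then have "x (t' - \<epsilon>) \<le> k" using j by blast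
      then show "x (t' - \<epsilon>) < x t'" using kl by simp
    qed
    then show False using nb[OF _ eq] j by blast
  qed
qed

lemma sup_margin:
  assumes K: "0 < K" and pos: "\<forall>t\<in>{0..T}. K * Lp x c d t < b"
  shows "\<exists>M<b. \<forall>t\<in>{0..T}. K * Lp x c d t \<le> M"
proof (rule ccontr)
  assume neg: "\<not> ?thesis"
  have "\<forall>n::nat. \<exists>t\<in>{0..T}. b - inverse (real (Suc n)) < K * Lp x c d t"
  proof
    fix n :: nat
    have "b - inverse (real (Suc n)) < b" by simp
    then show "\<exists>t\<in>{0..T}. b - inverse (real (Suc n)) < K * Lp x c d t"
      using neg by (meson not_le)
  qed
  then have "\<forall>n. \<exists>t. t \<in> {0..T} \<and> b - inverse (real (Suc n)) < K * Lp x c d t" by blast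
  from choice[OF this] obtain t where "\<forall>n. t n \<in> {0..T} \<and> b - inverse (real (Suc n)) < K * Lp x c d (t n)" by blast
  then have t: "\<And>n. t n \<in> {0..T}" "\<And>n. b - inverse (real (Suc n)) < K * Lp x c d (t n)" by blast+
  obtain r t' k where ck: "strict_mono r" "t' \<in> {0..T}" "(\<lambda>n. t (r n)) \<longlonglongrightarrow> t'"
     "\<forall>\<^sub>F n in sequentially. x (t (r n)) = k" "k \<le> x t'"
    using core[of t T, OF t(1)] by blast
  have L1: "(\<lambda>n. K * Lp x c d (t (r n))) \<longlonglongrightarrow> K * exp (real k * c - d * t')"
    by (rule lim_along[of t r, OF ck(3,4)])
  have L2: "(\<lambda>n. K * Lp x c d (t (r n))) \<longlonglongrightarrow> b"
  proof (rule tendsto_sandwich[of "\<lambda>n. b - inverse (real (Suc n))" _ _ "\<lambda>n. b"])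
    show "\<forall>\<^sub>F n in sequentially. K * Lp x c d (t (r n)) \<le> b"
      using pos t(1) by (intro always_eventually allI less_imp_le) auto
    have "b - inverse (real (Suc n)) \<le> K * Lp x c d (t (r n))" for n
    proof -
      have "n \<le> r n" using seq_suble[OF ck(1)] .
      then have "inverse (real (Suc (r n))) \<le> inverse (real (Suc n))"
        by (intro le_imp_inverse_le) auto
      then show ?thesis using t(2)[of "r n"] by linarith
    qed
    then show "\<forall>\<^sub>F n in sequentially. b - inverse (real (Suc n)) \<le> K * Lp x c d (t (r n))" by auto
    show "(\<lambda>n. b) \<longlonglongrightarrow> b" by simp
    show "(\<lambda>n. b - inverse (real (Suc n))) \<longlonglongrightarrow> b"
      using LIMSEQ_inverse_real_of_nat_add_minus[of b] by simp
  qed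
  have eq: "K * exp (real k * c - d * t') = b" using LIMSEQ_unique[OF L1 L2] .
  have "real k * c - d * t' \<le> real (x t') * c - d * t'" using ck(5) c by (auto intro: mult_right_mono)
  then have "K * exp (real k * c - d * t') \<le> K * Lp x c d t'" unfolding Lp_def using K by auto
  moreover have "K * Lp x c d t' < b" using pos ck(2) by auto
  ultimately show False using eq by linarith
qed

lemma Lp_pos: "0 < Lp x c d t" unfolding Lp_def by simp

lemma Lp_const: "x u = x t \<Longrightarrow> t < u \<Longrightarrow> Lp x c d u < Lp x c d t"
  unfolding Lp_def using d by simp

lemma scale_bounds:
  assumes "0 < \<phi>0" "0 < \<phi>" "m \<le> \<phi>0 * Lp x c d t" "\<phi>0 * Lp x c d t \<le> M"
  shows "\<phi> / \<phi>0 * m \<le> \<phi> * Lp x c d t" "\<phi> * Lp x c d t \<le> \<phi> / \<phi>0 * M"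
proof -
  have e: "\<phi> * Lp x c d t = \<phi> / \<phi>0 * (\<phi>0 * Lp x c d t)" using assms(1) by simp
  have p: "0 \<le> \<phi> / \<phi>0" using assms by simp
  show "\<phi> / \<phi>0 * m \<le> \<phi> * Lp x c d t" unfolding e by (rule mult_left_mono[OF assms(3) p])
  show "\<phi> * Lp x c d t \<le> \<phi> / \<phi>0 * M" unfolding e by (rule mult_left_mono[OF assms(4) p])
qed

lemma ev_exit:
  assumes "0 \<le> t" "\<phi>0 * Lp x c d t < a \<or> b < \<phi>0 * Lp x c d t" "ereal t < y"
    and that: "((\<lambda>\<phi>. \<phi>) \<longlongrightarrow> \<phi>0) F"
  shows "\<forall>\<^sub>F \<phi> in F. ift (\<lambda>t. \<phi> * Lp x c d t \<notin> {a<..<b}) < y"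
proof -
  have lim: "((\<lambda>\<phi>. \<phi> * Lp x c d t) \<longlongrightarrow> \<phi>0 * Lp x c d t) F" by (intro tendsto_intros that)
  have "\<forall>\<^sub>F \<phi> in F. \<phi> * Lp x c d t < a \<or> b < \<phi> * Lp x c d t"
    using assms(2)
  proof
    assume "\<phi>0 * Lp x c d t < a"
    from order_tendstoD(2)[OF lim this] show ?thesis by eventually_elim auto
  next
    assume "b < \<phi>0 * Lp x c d t"
    from order_tendstoD(1)[OF lim this] show ?thesis by eventually_elim auto
  qed
  then show ?thesis
  proof eventually_elim
    case (elim \<phi>)
    then have "ift (\<lambda>t. \<phi> * Lp x c d t \<notin> {a<..<b}) \<le> ereal t" by (intro ift_le assms(1)) auto
    then show ?case using assms(3) by auto
  qed
qed

lemma part1: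
  assumes x0: "x 0 = 0" and a: "0 < a" and \<phi>0: "a < \<phi>0" "\<phi>0 < b"
    and nbA: "\<And>s k. 0 < s \<Longrightarrow> \<phi>0 * exp (real k * c - d * s) = a \<Longrightarrow>
               \<not> (\<forall>\<epsilon>. 0 < \<epsilon> \<and> \<epsilon> \<le> s \<longrightarrow> x (s - \<epsilon>) < x s)"
    and nbB: "\<And>s. 0 < s \<Longrightarrow> \<phi>0 * Lp x c d s = b \<Longrightarrow>
               \<not> (\<forall>\<epsilon>. 0 < \<epsilon> \<and> \<epsilon> \<le> s \<longrightarrow> x (s - \<epsilon>) < x s)"
  shows "((\<lambda>\<phi>. ift (\<lambda>t. \<phi> * Lp x c d t \<notin> {a<..<b})) \<longlongrightarrow> ift (\<lambda>t. \<phi>0 * Lp x c d t \<notin> {a<..<b})) (at \<phi>0)"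
proof (rule order_tendstoI)
  define E where "E \<phi> = ift (\<lambda>t. \<phi> * Lp x c d t \<notin> {a<..<b})" for \<phi>
  have p0: "0 < \<phi>0" using a \<phi>0 by simp
  {
    fix y assume y: "y < ift (\<lambda>t. \<phi>0 * Lp x c d t \<notin> {a<..<b})"
    show "\<forall>\<^sub>F \<phi> in at \<phi>0. y < ift (\<lambda>t. \<phi> * Lp x c d t \<notin> {a<..<b})"
    proof (cases "y < 0")
      case True
      then show ?thesis using ift_nonneg by (intro always_eventually allI) (rule less_le_trans)
    next
      case False
      obtain T where T: "y < ereal T" "ereal T < ift (\<lambda>t. \<phi>0 * Lp x c d t \<notin> {a<..<b})"
        using ereal_dense2[OF y] by blast
      have T0: "0 \<le> T" using T(1) False by (cases y) auto
      have inside: "\<phi>0 * Lp x c d t \<in> {a<..<b}" if "t \<in> {0..T}" for t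
      proof -
        have "ereal t \<le> ereal T" using that by simp
        then have "ereal t < ift (\<lambda>t. \<phi>0 * Lp x c d t \<notin> {a<..<b})" using T(2) by (rule le_less_trans)
        then show ?thesis using ift_lt[of t] that by auto
      qed
      obtain m where m: "m > a" "\<forall>t\<in>{0..T}. m \<le> \<phi>0 * Lp x c d t"
        using inf_margin[OF p0, of T a] inside nbA by auto
      obtain M where M: "M < b" "\<forall>t\<in>{0..T}. \<phi>0 * Lp x c d t \<le> M"
        using sup_margin[OF p0, of T b] inside by auto
      have "0 < \<phi>0 * Lp x c d 0" using p0 Lp_pos[of 0] by simp
      moreover have "\<phi>0 * Lp x c d 0 \<le> M" using M(2) T0 by simp
      ultimately have M0: "0 < M" by linarith
      have ev1: "\<forall>\<^sub>F \<phi> in at \<phi>0. \<phi>0 * a / m < \<phi>"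
        by (rule order_tendstoD(1)[OF tendsto_ident_at]) (use m a p0 in \<open>simp add: field_simps\<close>)
      have ev2: "\<forall>\<^sub>F \<phi> in at \<phi>0. \<phi> < \<phi>0 * b / M"
        by (rule order_tendstoD(2)[OF tendsto_ident_at]) (use M M0 p0 in \<open>simp add: field_simps\<close>)
      from ev1 ev2 show ?thesis
      proof eventually_elim
        case (elim \<phi>)
        have "0 < \<phi>0 * a / m" using a m p0 by simp
        then have ph: "0 < \<phi>" using elim(1) by linarith
        have "ereal T \<le> ift (\<lambda>t. \<phi> * Lp x c d t \<notin> {a<..<b})"
        proof (rule ift_ge)
          fix t assume t: "0 \<le> t" "t \<le> T"
          have "\<phi> / \<phi>0 * m \<le> \<phi> * Lp x c d t" "\<phi> * Lp x c d t \<le> \<phi> / \<phi>0 * M"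
            using scale_bounds[OF p0 ph, of m t M] m M t by auto
          moreover have "a < \<phi> / \<phi>0 * m" using elim(1) p0 m a by (simp add: field_simps)
          moreover have "\<phi> / \<phi>0 * M < b" using elim(2) p0 M0 by (simp add: field_simps)
          ultimately show "\<not> \<phi> * Lp x c d t \<notin> {a<..<b}" by auto
        qed
        then show ?case using T(1) by auto
      qed
    qed
  }
  {
    fix y assume y: "ift (\<lambda>t. \<phi>0 * Lp x c d t \<notin> {a<..<b}) < y"
    show "\<forall>\<^sub>F \<phi> in at \<phi>0. ift (\<lambda>t. \<phi> * Lp x c d t \<notin> {a<..<b}) < y"
    proof -
      obtain s where s: "ift (\<lambda>t. \<phi>0 * Lp x c d t \<notin> {a<..<b}) = ereal s"
        using y ift_nonneg by (cases "ift (\<lambda>t. \<phi>0 * Lp x c d t \<notin> {a<..<b})") auto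
      have s0: "0 \<le> s" using ift_nonneg[of "\<lambda>t. \<phi>0 * Lp x c d t \<notin> {a<..<b}"] s by (simp add: zero_ereal_def)
      obtain y1 where y1: "s < y1" "ereal y1 < y" using ereal_dense2[of "ereal s" y] y s by auto
      obtain \<delta> where \<delta>: "\<delta> > 0" "\<And>u. s \<le> u \<and> u < s + \<delta> \<Longrightarrow> x u = x s" using rc[OF s0] by blast
      define w where "w = min y1 (s + \<delta>)"
      have sw: "s < w" using y1 \<delta> by (simp add: w_def)
      obtain t1 where t1: "0 \<le> t1" "\<phi>0 * Lp x c d t1 \<notin> {a<..<b}" "s \<le> t1" "t1 < w"
        using ift_approx[OF s sw] by blast
      have "s \<le> t1 \<and> t1 < s + \<delta>" using t1 by (auto simp: w_def)
      then have xt1: "x t1 = x s" using \<delta>(2)[of t1] by blast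
      have "\<exists>t. 0 \<le> t \<and> t < y1 \<and> (\<phi>0 * Lp x c d t < a \<or> b < \<phi>0 * Lp x c d t)"
      proof (cases "\<phi>0 * Lp x c d t1 = a")
        case True
        define t2 where "t2 = (t1 + w) / 2"
        have "s \<le> t2 \<and> t2 < s + \<delta>" using t1 by (auto simp: w_def t2_def)
        then have "x t2 = x s" using \<delta>(2)[of t2] by blast
        then have "Lp x c d t2 < Lp x c d t1" using xt1 t1 by (intro Lp_const) (auto simp: t2_def)
        then have "\<phi>0 * Lp x c d t2 < \<phi>0 * Lp x c d t1" using p0 by (rule mult_strict_left_mono)
        then have "\<phi>0 * Lp x c d t2 < a" using True by simp
        then show ?thesis using t1 by (intro exI[of _ t2]) (auto simp: t2_def w_def)
      next
        case na: False
        show ?thesis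
        proof (cases "\<phi>0 * Lp x c d t1 = b")
          case False
          then show ?thesis using na t1 by (intro exI[of _ t1]) (auto simp: w_def)
        next
          case True
          show ?thesis
          proof (cases "s < t1")
            case True
            define t2 where "t2 = (s + t1) / 2"
            have "s \<le> t2 \<and> t2 < s + \<delta>" using t1 True by (auto simp: w_def t2_def)
            then have "x t2 = x s" using \<delta>(2)[of t2] by blast
            then have "Lp x c d t1 < Lp x c d t2" using xt1 t1 True by (intro Lp_const) (auto simp: t2_def)
            then have "\<phi>0 * Lp x c d t1 < \<phi>0 * Lp x c d t2" using p0 by (rule mult_strict_left_mono)
            then have "b < \<phi>0 * Lp x c d t2" using \<open>\<phi>0 * Lp x c d t1 = b\<close> by simp
            then show ?thesis using t1 s0 True by (intro exI[of _ t2]) (auto simp: t2_def w_def)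
          next
            case False
            then have st: "t1 = s" using t1 by auto
            have spos: "0 < s"
            proof (rule ccontr)
              assume "\<not> 0 < s"
              then have "s = 0" using s0 by auto
              then have "\<phi>0 * Lp x c d t1 = \<phi>0" using st x0 by (simp add: Lp_def)
              then show False using \<open>\<phi>0 * Lp x c d t1 = b\<close> \<phi>0 by simp
            qed
            have "\<forall>\<epsilon>. 0 < \<epsilon> \<and> \<epsilon> \<le> s \<longrightarrow> x (s - \<epsilon>) < x s"
            proof (intro allI impI)
              fix \<epsilon> assume e: "0 < \<epsilon> \<and> \<epsilon> \<le> s"
              show "x (s - \<epsilon>) < x s"
              proof (rule ccontr)
                assume "\<not> x (s - \<epsilon>) < x s"
                moreover have "x (s - \<epsilon>) \<le> x s" using e by (intro monoD') auto
                ultimately have eq: "x (s - \<epsilon>) = x s" by simp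
                define u where "u = s - \<epsilon> / 2"
                have "x (s - \<epsilon>) \<le> x u" "x u \<le> x s" using e by (auto intro!: monoD' simp: u_def)
                then have xu: "x u = x s" using eq by simp
                have "u < s" using e by (simp add: u_def)
                have "Lp x c d s < Lp x c d u" by (rule Lp_const[OF xu[symmetric] \<open>u < s\<close>])
                then have "\<phi>0 * Lp x c d s < \<phi>0 * Lp x c d u" using p0 by (rule mult_strict_left_mono)
                then have "b < \<phi>0 * Lp x c d u" using \<open>\<phi>0 * Lp x c d t1 = b\<close> st by simp
                then have "ift (\<lambda>t. \<phi>0 * Lp x c d t \<notin> {a<..<b}) \<le> ereal u"
                  using e by (intro ift_le) (auto simp: u_def)
                then show False using s e by (auto simp: u_def)
              qed
            qed
            then show ?thesis using nbB[OF spos] \<open>\<phi>0 * Lp x c d t1 = b\<close> st by blast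
          qed
        qed
      qed
      then obtain t where t: "0 \<le> t" "t < y1" "\<phi>0 * Lp x c d t < a \<or> b < \<phi>0 * Lp x c d t" by blast
      have "ereal t < y" using t(2) y1(2) by (meson ereal_less_eq(3) le_less_trans less_imp_le) 
      then show ?thesis using ev_exit[OF t(1) t(3)] tendsto_ident_at by blast
    qed
  }
qed

lemma part2:
  assumes x0: "x 0 = 0" and a: "0 < a"
  shows "((\<lambda>\<phi>. ift (\<lambda>t. \<phi> * Lp x c d t \<notin> {a<..<b})) \<longlongrightarrow> 0) (at_right a)"
proof (rule order_tendstoI)
  fix y :: ereal assume "y < 0"
  then show "\<forall>\<^sub>F \<phi> in at_right a. y < ift (\<lambda>t. \<phi> * Lp x c d t \<notin> {a<..<b})"
    using ift_nonneg by (intro always_eventually allI) (rule less_le_trans)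
next
  fix y :: ereal assume y: "0 < y"
  obtain y1 where y1: "0 < y1" "ereal y1 < y" using ereal_dense2[of 0 y] y by (auto simp: zero_ereal_def)
  obtain \<delta> where \<delta>: "\<delta> > 0" "\<And>u. 0 \<le> u \<and> u < 0 + \<delta> \<Longrightarrow> x u = x 0" using rc[of 0] by blast
  define w where "w = min y1 \<delta>"
  have w: "0 < w" using y1 \<delta> by (simp add: w_def)
  have "a < a * exp (d * w)" using a w d by simp
  from eventually_at_right_real[OF this]
  show "\<forall>\<^sub>F \<phi> in at_right a. ift (\<lambda>t. \<phi> * Lp x c d t \<notin> {a<..<b}) < y"
  proof eventually_elim
    case (elim \<phi>)
    then have ph: "a < \<phi>" "\<phi> < a * exp (d * w)" by auto
    define t where "t = ln (\<phi> / a) / d"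
    have t0: "0 \<le> t" using ph a d by (simp add: t_def)
    have "\<phi> / a < exp (d * w)" using ph a by (simp add: field_simps)
    then have "ln (\<phi> / a) < ln (exp (d * w))" using ph a by (subst ln_less_cancel_iff) auto
    then have "ln (\<phi> / a) < d * w" by simp
    then have tw: "t < w" using d by (simp add: t_def field_simps)
    have xt: "x t = 0" using \<delta>(2)[of t] t0 tw x0 by (simp add: w_def)
    have "d * t = ln (\<phi> / a)" using d by (simp add: t_def)
    then have "\<phi> * Lp x c d t = \<phi> * exp (- ln (\<phi> / a))" by (simp add: Lp_def xt)
    also have "\<dots> = a" using ph a by (simp add: exp_minus)
    finally have "ift (\<lambda>t. \<phi> * Lp x c d t \<notin> {a<..<b}) \<le> ereal t" by (intro ift_le t0) auto
    also have "ereal t < ereal y1" using tw by (simp add: w_def)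
    also have "\<dots> < y" by (rule y1(2))
    finally show ?case .
  qed
qed

lemma part3:
  assumes a: "0 < a" "a < b"
    and nbA: "\<And>s k. 0 < s \<Longrightarrow> b * exp (real k * c - d * s) = a \<Longrightarrow>
               \<not> (\<forall>\<epsilon>. 0 < \<epsilon> \<and> \<epsilon> \<le> s \<longrightarrow> x (s - \<epsilon>) < x s)"
  shows "((\<lambda>\<phi>. ift (\<lambda>t. \<phi> * Lp x c d t \<notin> {a<..<b})) \<longlongrightarrow> ift (\<lambda>t. Lp x c d t \<notin> {a/b<..1})) (at_left b)"
proof (rule order_tendstoI)
  have b0: "0 < b" using a by simp
  {
    fix y assume y: "y < ift (\<lambda>t. Lp x c d t \<notin> {a/b<..1})"
    show "\<forall>\<^sub>F \<phi> in at_left b. y < ift (\<lambda>t. \<phi> * Lp x c d t \<notin> {a<..<b})"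
    proof (cases "y < 0")
      case True
      then show ?thesis using ift_nonneg by (intro always_eventually allI) (rule less_le_trans)
    next
      case False
      obtain T where T: "y < ereal T" "ereal T < ift (\<lambda>t. Lp x c d t \<notin> {a/b<..1})"
        using ereal_dense2[OF y] by blast
      have T0: "0 \<le> T" using T(1) False by (cases y) auto
      have inside: "Lp x c d t \<in> {a/b<..1}" if "t \<in> {0..T}" for t
      proof -
        have "ereal t \<le> ereal T" using that by simp
        then have "ereal t < ift (\<lambda>t. Lp x c d t \<notin> {a/b<..1})" using T(2) by (rule le_less_trans)
        then show ?thesis using ift_lt[of t] that by auto
      qed
      have inside2: "a < b * Lp x c d t" if "t \<in> {0..T}" for t
        using inside[OF that] b0 by (simp add: field_simps)
      obtain m where m: "m > a" "\<forall>t\<in>{0..T}. m \<le> b * Lp x c d t"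
        using inf_margin[OF b0, of T a] inside2 nbA by auto
      have "b * a / m < b" using m a b0 by (simp add: field_simps)
      from eventually_at_left_real[OF this] show ?thesis
      proof eventually_elim
        case (elim \<phi>)
        then have e: "b * a / m < \<phi>" "\<phi> < b" by auto
        have "0 < b * a / m" using a m b0 by simp
        then have ph: "0 < \<phi>" using e(1) by linarith
        have "ereal T \<le> ift (\<lambda>t. \<phi> * Lp x c d t \<notin> {a<..<b})"
        proof (rule ift_ge)
          fix t assume t: "0 \<le> t" "t \<le> T"
          have "\<phi> / b * m \<le> \<phi> * Lp x c d t"
            using scale_bounds(1)[OF b0 ph, of m t "b * Lp x c d t"] m t by auto
          moreover have "a < \<phi> / b * m" using e(1) b0 m a by (simp add: field_simps)
          moreover have "\<phi> * Lp x c d t \<le> \<phi>" using inside[of t] t ph by (simp add: mult_left_le)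
          ultimately show "\<not> \<phi> * Lp x c d t \<notin> {a<..<b}" using e(2) by auto
        qed
        then show ?case using T(1) by auto
      qed
    qed
  }
  {
    fix y assume y: "ift (\<lambda>t. Lp x c d t \<notin> {a/b<..1}) < y"
    obtain t1 where t1: "0 \<le> t1" "Lp x c d t1 \<notin> {a/b<..1}" "ereal t1 < y"
      using ift_lessD[OF y] by blast
    show "\<forall>\<^sub>F \<phi> in at_left b. ift (\<lambda>t. \<phi> * Lp x c d t \<notin> {a<..<b}) < y"
    proof (cases "1 < Lp x c d t1")
      case True
      then have "b < b * Lp x c d t1" using b0 by simp
      then show ?thesis using ev_exit[OF t1(1) _ t1(3)] tendsto_ident_at by blast
    next
      case False
      then have le: "b * Lp x c d t1 \<le> a" using t1(2) b0 by (auto simp: field_simps)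
      have "0 < b" by (rule b0)
      from eventually_at_left_real[OF this] show ?thesis
      proof eventually_elim
        case (elim \<phi>)
        have "\<phi> < b" using elim by simp
        then have "\<phi> * Lp x c d t1 < b * Lp x c d t1" using Lp_pos[of t1] by (rule mult_strict_right_mono)
        then have "ift (\<lambda>t. \<phi> * Lp x c d t \<notin> {a<..<b}) \<le> ereal t1"
          using le by (intro ift_le t1(1)) auto
        then show ?case using t1(3) by auto
      qed
    qed
  }
qed

end

lemma rc_from_cont:
  fixes f :: "real \<Rightarrow> nat"
  assumes "continuous (at_right t) (\<lambda>s. real (f s))"
  shows "\<exists>\<delta>>0. \<forall>u. t \<le> u \<and> u < t + \<delta> \<longrightarrow> f u = f t"
proof -
  have lim: "((\<lambda>s. real (f s)) \<longlongrightarrow> real (f t)) (at_right t)"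
    using assms by (simp add: continuous_within)
  have "\<forall>\<^sub>F u in at_right t. real (f u) < real (f t) + 1"
    by (rule order_tendstoD(2)[OF lim]) simp
  moreover have "\<forall>\<^sub>F u in at_right t. real (f t) - 1 < real (f u)"
    by (rule order_tendstoD(1)[OF lim]) simp
  ultimately have "\<forall>\<^sub>F u in at_right t. f u = f t" by eventually_elim auto
  then obtain b where b: "b > t" "\<And>u. u > t \<Longrightarrow> u < b \<Longrightarrow> f u = f t"
    unfolding eventually_at_right_field by blast
  show ?thesis
    by (rule exI[of _ "b - t"]) (use b in \<open>auto simp: le_less\<close>)
qed

lemma exp_eq_solve:
  assumes "0 < K" "K * exp z = A" "0 < d" "z = real k * c - d * s"
  shows "s = (real k * c - ln (A / K)) / d"
proof -
  have "exp z = A / K" using assms(1,2) by (simp add: field_simps)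
  then have "z = ln (A / K)" by (metis ln_exp)
  then show ?thesis using assms(3,4) by (simp add: field_simps)
qed

lemma AE_nojumps:
  assumes PP: "poisson_process M lam X" and lam: "0 < lam"
  shows "AE \<omega> in M. \<forall>k::nat. 0 < h k \<longrightarrow> \<not> (\<forall>\<epsilon>. 0 < \<epsilon> \<and> \<epsilon> \<le> h k \<longrightarrow> X (h k - \<epsilon>) \<omega> < X (h k) \<omega>)"
proof (subst AE_all_countable, intro allI)
  fix k
  show "AE \<omega> in M. 0 < h k \<longrightarrow> \<not> (\<forall>\<epsilon>. 0 < \<epsilon> \<and> \<epsilon> \<le> h k \<longrightarrow> X (h k - \<epsilon>) \<omega> < X (h k) \<omega>)"
  proof (cases "0 < h k")
    case True
    show ?thesis using no_jump[OF PP lam True] by (rule AE_mp) auto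
  next
    case False
    then show ?thesis by simp
  qed
qed


theorem proposition3p2:
  fixes M :: "'a measure" and X :: "real \<Rightarrow> 'a \<Rightarrow> nat"
    and lam0 lam1 a b \<alpha> \<beta> :: real
  assumes lam: "0 < lam0" "lam0 < lam1"
    and ab: "0 < a" "0 < b" "lam1 - lam0 > 1 / a + 1 / b"
    and PP: "poisson_process M lam0 X"
    and bounds: "0 < \<alpha>" "\<alpha> < b / a" "b / a < \<beta>"
    and optimal: "\<forall>\<psi>>0. is_stopping_time M X (exit_time (lik lam0 lam1 X) \<alpha> \<beta> \<psi>) \<and>
        (\<forall>\<sigma>. is_stopping_time M X \<sigma> \<longrightarrow>
           bayes_cost M (lik lam0 lam1 X) a b \<psi> (exit_time (lik lam0 lam1 X) \<alpha> \<beta> \<psi>)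
             \<le> bayes_cost M (lik lam0 lam1 X) a b \<psi> \<sigma>)"
  shows "(\<forall>\<phi>0\<in>{\<alpha><..<\<beta>}. AE \<omega> in M.
            ((\<lambda>\<phi>. exit_time (lik lam0 lam1 X) \<alpha> \<beta> \<phi> \<omega>)
               \<longlongrightarrow> exit_time (lik lam0 lam1 X) \<alpha> \<beta> \<phi>0 \<omega>) (at \<phi>0))
       \<and> (AE \<omega> in M. ((\<lambda>\<phi>. exit_time (lik lam0 lam1 X) \<alpha> \<beta> \<phi> \<omega>) \<longlongrightarrow> 0) (at_right \<alpha>))
       \<and> (AE \<omega> in M. ((\<lambda>\<phi>. exit_time (lik lam0 lam1 X) \<alpha> \<beta> \<phi> \<omega>)
               \<longlongrightarrow> theta_time (lik lam0 lam1 X) \<alpha> \<beta> \<omega>) (at_left \<beta>))"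

proof -
  define c where "c = ln (lam1 / lam0)"
  define d where "d = lam1 - lam0"
  have c: "0 < c" using lam by (simp add: c_def)
  have d: "0 < d" using lam by (simp add: d_def)
  have pathprops: "pth (\<lambda>t. X t \<omega>) c d \<and> X 0 \<omega> = 0" if "\<omega> \<in> space M" for \<omega>
  proof -
    have h: "X 0 \<omega> = 0 \<and> mono_on {0..} (\<lambda>t. X t \<omega>) \<and> (\<forall>t\<ge>0. continuous (at_right t) (\<lambda>s. real (X s \<omega>)))"
      using PP that unfolding poisson_process_def by blast
    have "\<exists>\<delta>>0. \<forall>u. t \<le> u \<and> u < t + \<delta> \<longrightarrow> X u \<omega> = X t \<omega>" if "0 \<le> t" for t
      using rc_from_cont[of t "\<lambda>s. X s \<omega>"] h that by blast
    then show ?thesis using h c d by (auto simp: pth_def)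
  qed
  have ex_eq: "exit_time (lik lam0 lam1 X) \<alpha> \<beta> \<phi> \<omega> = ift (\<lambda>t. \<phi> * Lp (\<lambda>t. X t \<omega>) c d t \<notin> {\<alpha><..<\<beta>})" for \<phi> \<omega>
    unfolding exit_time_def ift_def lik_def Lp_def c_def d_def by simp
  have th_eq: "theta_time (lik lam0 lam1 X) \<alpha> \<beta> \<omega> = ift (\<lambda>t. Lp (\<lambda>t. X t \<omega>) c d t \<notin> {\<alpha>/\<beta><..1})" for \<omega>
    unfolding theta_time_def ift_def lik_def Lp_def c_def d_def by simp
  have a0: "0 < \<alpha>" "\<alpha> < \<beta>" using bounds by auto
  have P1: "AE \<omega> in M. ((\<lambda>\<phi>. exit_time (lik lam0 lam1 X) \<alpha> \<beta> \<phi> \<omega>)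
               \<longlongrightarrow> exit_time (lik lam0 lam1 X) \<alpha> \<beta> \<phi>0 \<omega>) (at \<phi>0)" if \<phi>0: "\<phi>0 \<in> {\<alpha><..<\<beta>}" for \<phi>0
  proof -
    define hA where "hA k = (real k * c - ln (\<alpha> / \<phi>0)) / d" for k :: nat
    define hB where "hB k = (real k * c - ln (\<beta> / \<phi>0)) / d" for k :: nat
    have p0: "0 < \<phi>0" using \<phi>0 a0 by auto
    from AE_nojumps[OF PP lam(1), of hA] AE_nojumps[OF PP lam(1), of hB] AE_space
    show ?thesis
    proof (eventually_elim)
      case (elim \<omega>)
      interpret pth "\<lambda>t. X t \<omega>" c d using pathprops[OF elim(3)] by blast
      have x0: "X 0 \<omega> = 0" using pathprops[OF elim(3)] by blast
      have "((\<lambda>\<phi>. ift (\<lambda>t. \<phi> * Lp (\<lambda>t. X t \<omega>) c d t \<notin> {\<alpha><..<\<beta>})) \<longlongrightarrow> ift (\<lambda>t. \<phi>0 * Lp (\<lambda>t. X t \<omega>) c d t \<notin> {\<alpha><..<\<beta>})) (at \<phi>0)"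
      proof (rule part1)
        show "X 0 \<omega> = 0" by (rule x0)
        show "0 < \<alpha>" "\<alpha> < \<phi>0" "\<phi>0 < \<beta>" using \<phi>0 a0 by auto
        fix s k assume s: "0 < s" and eq: "\<phi>0 * exp (real k * c - d * s) = \<alpha>"
        have "s = hA k" unfolding hA_def by (rule exp_eq_solve[OF p0 eq d refl])
        then show "\<not> (\<forall>\<epsilon>. 0 < \<epsilon> \<and> \<epsilon> \<le> s \<longrightarrow> X (s - \<epsilon>) \<omega> < X s \<omega>)" using elim(1) s by blast
      next
        fix s assume s: "0 < s" and eq: "\<phi>0 * Lp (\<lambda>t. X t \<omega>) c d s = \<beta>"
        have eq': "\<phi>0 * exp (real (X s \<omega>) * c - d * s) = \<beta>" using eq by (simp add: Lp_def)
        have "s = hB (X s \<omega>)" unfolding hB_def by (rule exp_eq_solve[OF p0 eq' d refl])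
        then show "\<not> (\<forall>\<epsilon>. 0 < \<epsilon> \<and> \<epsilon> \<le> s \<longrightarrow> X (s - \<epsilon>) \<omega> < X s \<omega>)" using elim(2) s by metis
      qed
      then show ?case unfolding ex_eq .
    qed
  qed
  have P2: "AE \<omega> in M. ((\<lambda>\<phi>. exit_time (lik lam0 lam1 X) \<alpha> \<beta> \<phi> \<omega>) \<longlongrightarrow> 0) (at_right \<alpha>)"
    using AE_space
  proof eventually_elim
    case (elim \<omega>)
    interpret pth "\<lambda>t. X t \<omega>" c d using pathprops[OF elim] by blast
    have x0: "X 0 \<omega> = 0" using pathprops[OF elim] by blast
    show ?case unfolding ex_eq by (rule part2[OF x0 a0(1)])
  qed
  have P3: "AE \<omega> in M. ((\<lambda>\<phi>. exit_time (lik lam0 lam1 X) \<alpha> \<beta> \<phi> \<omega>)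
               \<longlongrightarrow> theta_time (lik lam0 lam1 X) \<alpha> \<beta> \<omega>) (at_left \<beta>)"
  proof -
    define hA where "hA k = (real k * c - ln (\<alpha> / \<beta>)) / d" for k :: nat
    have b0: "0 < \<beta>" using a0 by auto
    from AE_nojumps[OF PP lam(1), of hA] AE_space
    show ?thesis
    proof (eventually_elim)
      case (elim \<omega>)
      interpret pth "\<lambda>t. X t \<omega>" c d using pathprops[OF elim(2)] by blast
      have "((\<lambda>\<phi>. ift (\<lambda>t. \<phi> * Lp (\<lambda>t. X t \<omega>) c d t \<notin> {\<alpha><..<\<beta>})) \<longlongrightarrow> ift (\<lambda>t. Lp (\<lambda>t. X t \<omega>) c d t \<notin> {\<alpha>/\<beta><..1})) (at_left \<beta>)"
      proof (rule part3[OF a0])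
        fix s k assume s: "0 < s" and eq: "\<beta> * exp (real k * c - d * s) = \<alpha>"
        have "s = hA k" unfolding hA_def by (rule exp_eq_solve[OF b0 eq d refl])
        then show "\<not> (\<forall>\<epsilon>. 0 < \<epsilon> \<and> \<epsilon> \<le> s \<longrightarrow> X (s - \<epsilon>) \<omega> < X s \<omega>)" using elim(1) s by blast
      qed
      then show ?case unfolding ex_eq th_eq .
    qed
  qed
  show ?thesis using P1 P2 P3 by blast
qed

end
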